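(* Let $S\subset\mathbb{R}^3$ be a surface foliated by circles (or arcs of circles) contained in planes parallel to the $xy$-plane, and let $\phi(x,y,z)=z$. Suppose that the $\phi$-mean curvature $H_\phi$ of $S$ is a nonzero constant. Then $S$ is a surface of revolution whose axis is parallel to the $z$-axis.
   Context: For a smooth oriented surface $S$ with unit normal $N=(N_1,N_2,N_3)$, $H$ is the mean curvature normalized so that the mean curvature vector is $\Delta_S X=2HN$. For the density $e^{\phi}$ with $\phi(x,y,z)=z$, the $\phi$-mean curvature is $H_\phi=H-\tfrac12\frac{d\phi}{dN}=H-\tfrac12 N_3$. Locally such an $S$ is parametrized as $X(s,t)=(a(s),b(s),s)+r(s)(\cos t,\sin t,0)$ with $a,b,r$ smooth, $r>0$, $t$ in an interval. The result is local. *)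

theory Defs
  imports "HOL-Analysis.Analysis" "HOL-Analysis.Cross3"
begin

definition smooth_on_real :: "real set \<Rightarrow> (real \<Rightarrow> real) \<Rightarrow> bool" where
  "smooth_on_real I f \<longleftrightarrow> (\<forall>n. \<forall>s\<in>I. ((deriv ^^ n) f) differentiable (at s))"

definition d_s :: "(real \<Rightarrow> real \<Rightarrow> real^3) \<Rightarrow> real \<Rightarrow> real \<Rightarrow> real^3" where
  "d_s X s t = vector_derivative (\<lambda>\<sigma>. X \<sigma> t) (at s)"

definition d_t :: "(real \<Rightarrow> real \<Rightarrow> real^3) \<Rightarrow> real \<Rightarrow> real \<Rightarrow> real^3" where
  "d_t X s t = vector_derivative (\<lambda>\<tau>. X s \<tau>) (at t)"

definition unit_normal :: "(real \<Rightarrow> real \<Rightarrow> real^3) \<Rightarrow> real \<Rightarrow> real \<Rightarrow> real^3" where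
  "unit_normal X s t = (1 / norm (cross3 (d_s X s t) (d_t X s t))) *\<^sub>R (cross3 (d_s X s t) (d_t X s t))"

text \<open>Mean curvature H = (eG - 2fF + gE) / (2(EG - F^2)), so that the mean
  curvature vector (Laplace-Beltrami of X) equals 2 H N.\<close>
definition mean_curv :: "(real \<Rightarrow> real \<Rightarrow> real^3) \<Rightarrow> real \<Rightarrow> real \<Rightarrow> real" where
  "mean_curv X s t =
    (let Xs = d_s X s t; Xt = d_t X s t; N = unit_normal X s t;
         E = Xs \<bullet> Xs; F = Xs \<bullet> Xt; G = Xt \<bullet> Xt;
         e = d_s (d_s X) s t \<bullet> N; f = d_t (d_s X) s t \<bullet> N; g = d_t (d_t X) s t \<bullet> N
     in (e * G - 2 * f * F + g * E) / (2 * (E * G - F\<^sup>2)))"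

text \<open>phi-mean curvature for the density e^phi with phi(x,y,z) = z:
  H_phi = H - (1/2) N_3.\<close>
definition phi_mean_curv :: "(real \<Rightarrow> real \<Rightarrow> real^3) \<Rightarrow> real \<Rightarrow> real \<Rightarrow> real" where
  "phi_mean_curv X s t = mean_curv X s t - (1/2) * (unit_normal X s t $ 3)"

end

theory Submission
  imports Defs "HOL-Computational_Algebra.Polynomial"
begin

lemma vec3_eq: "(vector [x1, x2, x3] :: real^3) = x1 *\<^sub>R vector [1,0,0] + x2 *\<^sub>R vector [0,1,0] + x3 *\<^sub>R vector [0,0,1]"
  by (simp add: vec_eq_iff forall_3 vector_3)

lemma vec3_deriv:
  assumes "(f1 has_real_derivative d1) (at x)" "(f2 has_real_derivative d2) (at x)" "(f3 has_real_derivative d3) (at x)"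
  shows "((\<lambda>x. vector [f1 x, f2 x, f3 x] :: real^3) has_vector_derivative vector [d1, d2, d3]) (at x)"
proof -
  have "((\<lambda>x. f1 x *\<^sub>R (vector [1,0,0]::real^3) + f2 x *\<^sub>R vector [0,1,0] + f3 x *\<^sub>R vector [0,0,1]) has_vector_derivative
     (f1 x *\<^sub>R 0 + d1 *\<^sub>R vector [1,0,0] + (f2 x *\<^sub>R 0 + d2 *\<^sub>R vector [0,1,0]) + (f3 x *\<^sub>R 0 + d3 *\<^sub>R vector [0,0,1]))) (at x)"
    by (intro derivative_intros assms)
  then show ?thesis by (simp add: vec3_eq[symmetric])
qed

lemma inner3: "(vector [x1, x2, x3] :: real^3) \<bullet> vector [y1, y2, y3] = x1*y1 + x2*y2 + x3*y3"
  by (simp add: inner_vec_def sum_3 vector_3)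

lemma cross3v: "cross3 (vector [x1, x2, x3]) (vector [y1, y2, y3]) = vector [x2*y3 - x3*y2, x3*y1 - x1*y3, x1*y2 - x2*y1]"
  by (simp add: cross3_def vec_eq_iff forall_3 vector_3)


lemma smooth_D1:
  assumes "smooth_on_real I f" "s \<in> I"
  shows "(f has_real_derivative deriv f s) (at s)" "(deriv f has_real_derivative deriv (deriv f) s) (at s)"
proof -
  have "((deriv ^^ 0) f) differentiable (at s)" "((deriv ^^ 1) f) differentiable (at s)"
    using assms unfolding smooth_on_real_def by blast+
  then show "(f has_real_derivative deriv f s) (at s)" "(deriv f has_real_derivative deriv (deriv f) s) (at s)"
    by (simp_all add: DERIV_deriv_iff_real_differentiable)
qed

lemma geom:
  fixes a b r :: "real \<Rightarrow> real" and I :: "real set" and X :: "real \<Rightarrow> real \<Rightarrow> real^3"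
  assumes I: "open I" and s: "s \<in> I"
      and smooth: "smooth_on_real I a" "smooth_on_real I b" "smooth_on_real I r"
      and X_def: "X = (\<lambda>s t. vector [a s + r s * cos t, b s + r s * sin t, s])"
  shows "d_s X s t = vector [deriv a s + deriv r s * cos t, deriv b s + deriv r s * sin t, 1]"
    "d_t X s t = vector [- r s * sin t, r s * cos t, 0]"
    "d_s (d_s X) s t = vector [deriv (deriv a) s + deriv (deriv r) s * cos t, deriv (deriv b) s + deriv (deriv r) s * sin t, 0]"
    "d_t (d_s X) s t = vector [- deriv r s * sin t, deriv r s * cos t, 0]"
    "d_t (d_t X) s t = vector [- r s * cos t, - r s * sin t, 0]"
proof -
  have Xs: "d_s X \<sigma> t = vector [deriv a \<sigma> + deriv r \<sigma> * cos t, deriv b \<sigma> + deriv r \<sigma> * sin t, 1]"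
    if "\<sigma> \<in> I" for \<sigma> t
  proof -
    note D = smooth_D1[OF smooth(1) that] smooth_D1[OF smooth(2) that] smooth_D1[OF smooth(3) that]
    have "((\<lambda>\<sigma>. X \<sigma> t) has_vector_derivative vector [deriv a \<sigma> + deriv r \<sigma> * cos t, deriv b \<sigma> + deriv r \<sigma> * sin t, 1]) (at \<sigma>)"
      unfolding X_def by (intro vec3_deriv derivative_eq_intros D refl) (auto intro: D)
    then show ?thesis unfolding d_s_def by (rule vector_derivative_at)
  qed
  show "d_s X s t = vector [deriv a s + deriv r s * cos t, deriv b s + deriv r s * sin t, 1]"
    using Xs[OF s] .
  have Xt: "d_t X \<sigma> t = vector [- r \<sigma> * sin t, r \<sigma> * cos t, 0]" for \<sigma> t
  proof -
    have "((\<lambda>\<tau>. X \<sigma> \<tau>) has_vector_derivative vector [- r \<sigma> * sin t, r \<sigma> * cos t, 0]) (at t)"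
      unfolding X_def by (intro vec3_deriv derivative_eq_intros refl) auto
    then show ?thesis unfolding d_t_def by (rule vector_derivative_at)
  qed
  show "d_t X s t = vector [- r s * sin t, r s * cos t, 0]" using Xt .
  show "d_s (d_s X) s t = vector [deriv (deriv a) s + deriv (deriv r) s * cos t, deriv (deriv b) s + deriv (deriv r) s * sin t, 0]"
  proof -
    note D = smooth_D1[OF smooth(1) s] smooth_D1[OF smooth(2) s] smooth_D1[OF smooth(3) s]
    have "((\<lambda>\<sigma>. vector [deriv a \<sigma> + deriv r \<sigma> * cos t, deriv b \<sigma> + deriv r \<sigma> * sin t, 1] :: real^3) has_vector_derivative vector [deriv (deriv a) s + deriv (deriv r) s * cos t, deriv (deriv b) s + deriv (deriv r) s * sin t, 0]) (at s)"
      by (intro vec3_deriv derivative_eq_intros D refl) (auto intro: D)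
    then have "((\<lambda>\<sigma>. d_s X \<sigma> t) has_vector_derivative vector [deriv (deriv a) s + deriv (deriv r) s * cos t, deriv (deriv b) s + deriv (deriv r) s * sin t, 0]) (at s)"
      by (rule has_vector_derivative_transform_within_open[OF _ I s]) (simp add: Xs)
    then show ?thesis unfolding d_s_def[of "d_s X"] by (rule vector_derivative_at)
  qed
  show "d_t (d_s X) s t = vector [- deriv r s * sin t, deriv r s * cos t, 0]"
  proof -
    have "((\<lambda>\<tau>. d_s X s \<tau>) has_vector_derivative vector [- deriv r s * sin t, deriv r s * cos t, 0]) (at t)"
      unfolding Xs[OF s] by (intro vec3_deriv derivative_eq_intros refl) auto
    then show ?thesis unfolding d_t_def[of "d_s X"] by (rule vector_derivative_at)
  qed
  show "d_t (d_t X) s t = vector [- r s * cos t, - r s * sin t, 0]"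
  proof -
    have "((\<lambda>\<tau>. d_t X s \<tau>) has_vector_derivative vector [- r s * cos t, - r s * sin t, 0]) (at t)"
      unfolding Xt by (intro vec3_deriv derivative_eq_intros refl) auto
    then show ?thesis unfolding d_t_def[of "d_t X"] by (rule vector_derivative_at)
  qed
qed


lemma alg:
  fixes A B R A2 B2 R2 r C S c :: real
  assumes CS: "C^2 + S^2 = 1" and r: "r > 0"
    and Xs: "Xs = vector [A + R * C, B + R * S, 1]"
    and Xt: "Xt = vector [- r * S, r * C, 0]"
    and Xss: "Xss = vector [A2 + R2 * C, B2 + R2 * S, 0]"
    and Xst: "Xst = vector [- R * S, R * C, 0]"
    and Xtt: "Xtt = vector [- r * C, - r * S, 0]"
    and N: "N = (1 / norm (cross3 Xs Xt)) *\<^sub>R (cross3 Xs Xt)"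
    and eq: "c = (let E = Xs \<bullet> Xs; F = Xs \<bullet> Xt; G = Xt \<bullet> Xt;
         e = Xss \<bullet> N; f = Xst \<bullet> N; g = Xtt \<bullet> N
     in (e * G - 2 * f * F + g * E) / (2 * (E * G - F\<^sup>2))) - (1/2) * (N $ 3)"
  shows "(1 + (A*C+B*S+R)^2 + (B*C-A*S)^2 - r*(A2*C+B2*S+R2) - r*(A*C+B*S+R)*(1+(A*C+B*S+R)^2))^2
         = (2*c*r)^2 * (1 + (A*C+B*S+R)^2)^3"
proof -
  define q where "q = A*C+B*S+R"
  define D where "D = r^2 * (1 + q^2)"
  define W where "W = sqrt D"
  have Dpos: "D > 0" using r unfolding D_def by (simp add: add_pos_nonneg)
  have W2: "W^2 = D" "W > 0" using Dpos unfolding W_def by auto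
  have cr: "cross3 Xs Xt = vector [- r * C, - r * S, r * q]"
    unfolding Xs Xt cross3v q_def
    using CS by (simp add: vec_eq_iff forall_3 vector_3; algebra)
  have nrm: "norm (cross3 Xs Xt) = W"
    unfolding cr W_def D_def norm_eq_sqrt_inner inner3
    by (rule arg_cong[where f=sqrt]) (use CS in algebra)
  have NN: "N = vector [- r * C / W, - r * S / W, r * q / W]"
    unfolding N nrm unfolding cr by (simp add: vec_eq_iff forall_3 vector_3)
  define L where "L = 1 + q^2 + (B*C-A*S)^2 - r*(A2*C+B2*S+R2) - r*q*(1+q^2)"
  have E: "Xs \<bullet> Xs = 1 + q^2 + (B*C-A*S)^2" unfolding Xs inner3 q_def
    using CS by algebra
  have F: "Xs \<bullet> Xt = r * (B*C - A*S)" unfolding Xs Xt inner3 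
    by (simp add: algebra_simps power2_eq_square)
  have G: "Xt \<bullet> Xt = r^2" unfolding Xt inner3 
    using CS by algebra
  have e: "Xss \<bullet> N = - r * (A2*C+B2*S+R2) / W" unfolding Xss NN inner3
    using CS W2 by (simp add: field_simps; algebra)
  have f: "Xst \<bullet> N = 0" unfolding Xst NN inner3
    by (simp add: field_simps)
  have g: "Xtt \<bullet> N = r^2 / W" unfolding Xtt NN inner3
    using CS W2 by (simp add: field_simps; algebra)
  have lag: "(1 + q^2 + (B*C-A*S)^2) * r^2 - (r * (B*C - A*S))^2 = D"
    unfolding D_def by (simp add: algebra_simps power2_eq_square)
  have N3: "N $ 3 = r * q / W" unfolding NN by simp
  have "c = (- r * (A2*C+B2*S+R2) / W * r^2 + r^2 / W * (1 + q^2 + (B*C-A*S)^2)) / (2 * D) - 1/2 * (r*q/W)"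
    using eq unfolding Let_def E F G e f g N3 lag by simp
  moreover have "((- r * (A2*C+B2*S+R2) / W * r^2 + r^2 / W * (1 + q^2 + (B*C-A*S)^2)) / (2 * D) - 1/2 * (r*q/W)) * (2*D*W) = (- r * (A2*C+B2*S+R2) * r^2 + r^2 * (1 + q^2 + (B*C-A*S)^2)) - r*q*D"
    using W2 Dpos by (simp add: field_simps)
  ultimately have c1: "c * (2*D*W) = (- r * (A2*C+B2*S+R2) * r^2 + r^2 * (1 + q^2 + (B*C-A*S)^2)) - r*q*D"
    by simp
  have "2 * c * D * W = r^2 * L"
    using c1 unfolding L_def D_def by (simp add: algebra_simps power2_eq_square)
  then have "(r^2 * L)^2 = (2*c*D*W)^2" by simp
  also have "... = 4*c^2*D^2*W^2" by (simp add: power_mult_distrib)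
  also have "... = r^4 * ((2*c*r)^2 * (1+q^2)^3)" unfolding W2(1) D_def
    by (simp add: power_mult_distrib algebra_simps power2_eq_square power3_eq_cube power4_eq_xxxx)
  finally have "r^4 * L^2 = r^4 * ((2*c*r)^2 * (1+q^2)^3)" by (simp add: power_mult_distrib flip: power_mult)
  then have "L^2 = (2*c*r)^2 * (1+q^2)^3" using r by simp
  then show ?thesis unfolding L_def q_def .
qed


lemma cos_sin_2arctan:
  "cos (2 * arctan x) = (1 - x^2) / (1 + x^2)" "sin (2 * arctan x) = 2 * x / (1 + x^2)"
proof -
  have p: "0 < 1 + x^2" by (simp add: add_pos_nonneg)
  have s: "(sqrt (1 + x^2))^2 = 1 + x^2" using p by simp
  show "cos (2 * arctan x) = (1 - x^2) / (1 + x^2)"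
    unfolding cos_double cos_arctan sin_arctan using p by (simp add: power_divide s field_simps)
  show "sin (2 * arctan x) = 2 * x / (1 + x^2)"
    unfolding sin_double cos_arctan sin_arctan using p
    by (simp add: field_simps power2_eq_square[symmetric] s)
qed

lemma many_x:
  fixes J :: "real set"
  assumes "open J" "J \<noteq> {}"
  shows "infinite {x. \<exists>t\<in>J. cos t = (1 - x^2) / (1 + x^2) \<and> sin t = 2 * x / (1 + x^2)}"
proof -
  obtain t0 where t0: "t0 \<in> J" using assms by blast
  obtain e where e: "e > 0" "ball t0 e \<subseteq> J" using assms(1) t0 open_contains_ball by blast
  define k where "k = \<lfloor>(t0 + pi) / (2*pi)\<rfloor>"
  define th0 where "th0 = t0 - 2*pi * of_int k"
  have "of_int k \<le> (t0 + pi) / (2*pi)" "(t0 + pi) / (2*pi) < of_int k + 1" unfolding k_def by linarith+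
  then have th0: "-pi \<le> th0" "th0 < pi" unfolding th0_def using pi_gt_zero by (simp_all add: field_simps)
  define th1 where "th1 = min (th0 + e) pi"
  have th1: "th0 < th1" "th1 \<le> pi" "th1 \<le> th0 + e" unfolding th1_def using th0 e by auto
  define ylo where "ylo = (2*th0 + th1)/6"
  define yhi where "yhi = (th0 + 2*th1)/6"
  have y: "-(pi/2) < ylo" "ylo < yhi" "yhi < pi/2" "th0 < 2*ylo" "2*yhi < th1"
    unfolding ylo_def yhi_def using th0 th1 by auto
  have tl: "tan ylo < tan yhi" using y by (intro tan_monotone) auto
  have sub: "{tan ylo..tan yhi} \<subseteq> {x. \<exists>t\<in>J. cos t = (1 - x^2) / (1 + x^2) \<and> sin t = 2 * x / (1 + x^2)}"
  proof
    fix x assume x: "x \<in> {tan ylo..tan yhi}"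
    have "arctan (tan ylo) \<le> arctan x" "arctan x \<le> arctan (tan yhi)" using x by (auto simp: arctan_le_iff)
    then have ax: "ylo \<le> arctan x" "arctan x \<le> yhi" using y by (simp_all add: arctan_tan)
    define t where "t = 2 * arctan x + 2*pi * of_int k"
    have "dist t0 t < e" unfolding t_def dist_real_def using ax y th1 th0_def by auto
    then have "t \<in> J" using e by auto
    moreover have "cos t = (1 - x^2) / (1 + x^2)" "sin t = 2 * x / (1 + x^2)"
      unfolding t_def cos_add sin_add by (simp_all add: cos_sin_2arctan)
    ultimately show "x \<in> {x. \<exists>t\<in>J. cos t = (1 - x^2) / (1 + x^2) \<and> sin t = 2 * x / (1 + x^2)}" by blast
  qed
  show ?thesis using infinite_Icc[OF tl] sub finite_subset by blast
qed


lemma subst_x: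
  fixes A B R al be ga rr ka x C S :: real
  assumes C: "C = (1 - x^2) / (1 + x^2)" and S: "S = 2*x / (1 + x^2)"
    and hyp: "(1 + (A*C+B*S+R)^2 + (B*C-A*S)^2 - rr*(al*C+be*S+ga) - rr*(A*C+B*S+R)*(1+(A*C+B*S+R)^2))^2
         = ka^2 * (1 + (A*C+B*S+R)^2)^3"
  shows "((1+x^2)^3 + (A*(1-x^2) + B*(2*x) + R*(1+x^2))^2*(1+x^2) + (B*(1-x^2) - A*(2*x))^2*(1+x^2)
          - rr*(al*(1-x^2) + be*(2*x) + ga*(1+x^2))*(1+x^2)^2
          - rr*(A*(1-x^2) + B*(2*x) + R*(1+x^2))*((1+x^2)^2 + (A*(1-x^2) + B*(2*x) + R*(1+x^2))^2))^2
        = ka^2 * ((1+x^2)^2 + (A*(1-x^2) + B*(2*x) + R*(1+x^2))^2)^3"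
proof -
  define m where "m = 1 + x^2"
  have m: "m > 0" unfolding m_def by (simp add: add_pos_nonneg)
  define qm where "qm = A*(1-x^2) + B*(2*x) + R*m"
  define pm where "pm = B*(1-x^2) - A*(2*x)"
  define Mm where "Mm = al*(1-x^2) + be*(2*x) + ga*m"
  have C': "C = (1-x^2)/m" and S': "S = 2*x/m" using C S m_def by auto
  have q: "A*C+B*S+R = qm / m" unfolding C' S' qm_def using m by (simp add: field_simps)
  have p: "B*C-A*S = pm / m" unfolding C' S' pm_def using m by (simp add: field_simps)
  have M: "al*C+be*S+ga = Mm / m" unfolding C' S' Mm_def using m by (simp add: field_simps)
  define Lm where "Lm = m^3 + qm^2*m + pm^2*m - rr*Mm*m^2 - rr*qm*(m^2+qm^2)"
  define Um where "Um = m^2 + qm^2"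
  have L: "1 + (qm/m)^2 + (pm/m)^2 - rr*(Mm/m) - rr*(qm/m)*(1+(qm/m)^2) = Lm / m^3"
    unfolding Lm_def using m by (simp add: field_simps power2_eq_square power3_eq_cube)
  have U: "1 + (qm/m)^2 = Um / m^2" unfolding Um_def using m by (simp add: field_simps power2_eq_square)
  have h2: "(1 + (qm/m)^2 + (pm/m)^2 - rr*(Mm/m) - rr*(qm/m)*(1+(qm/m)^2))^2 = ka^2 * (1+(qm/m)^2)^3"
    using hyp by (simp only: q p M)
  have "(Lm / m^3)^2 = ka^2 * (Um/m^2)^3" using h2[unfolded L] unfolding U .
  then have "Lm^2 = ka^2 * Um^3" using m by (simp add: field_simps power2_eq_square power3_eq_cube)
  then show ?thesis unfolding Lm_def Um_def m_def qm_def pm_def Mm_def .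
qed


lemma poly_contra:
  fixes A B R al be ga rr ka :: real and Xs :: "real set"
  assumes ka: "ka \<noteq> 0" and inf: "infinite Xs"
    and hx: "\<And>x. x \<in> Xs \<Longrightarrow> ((1+x^2)^3 + (A*(1-x^2) + B*(2*x) + R*(1+x^2))^2*(1+x^2) + (B*(1-x^2) - A*(2*x))^2*(1+x^2)
          - rr*(al*(1-x^2) + be*(2*x) + ga*(1+x^2))*(1+x^2)^2
          - rr*(A*(1-x^2) + B*(2*x) + R*(1+x^2))*((1+x^2)^2 + (A*(1-x^2) + B*(2*x) + R*(1+x^2))^2))^2
        = ka^2 * ((1+x^2)^2 + (A*(1-x^2) + B*(2*x) + R*(1+x^2))^2)^3"
  shows "A = 0 \<and> B = 0"
proof (rule ccontr)
  assume AB: "\<not> (A = 0 \<and> B = 0)"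
  define PM :: "complex poly" where "PM = [:1, 0, 1:]"
  define PQ :: "complex poly" where "PQ = [:of_real (A+R), of_real (2*B), of_real (R-A):]"
  define PP :: "complex poly" where "PP = [:of_real B, of_real (-2*A), of_real (-B):]"
  define PMM :: "complex poly" where "PMM = [:of_real (al+ga), of_real (2*be), of_real (ga-al):]"
  define PL where "PL = PM^3 + PQ^2*PM + PP^2*PM - smult (of_real rr) (PMM*PM^2) - smult (of_real rr) (PQ*(PM^2+PQ^2))"
  define PU where "PU = PM^2 + PQ^2"
  define P where "P = PL^2 - smult (of_real (ka^2)) (PU^3)"
  have ev: "poly P (of_real x) = 0" if "x \<in> Xs" for x
  proof -
    have e1: "poly PM (of_real x) = of_real (1+x^2)" unfolding PM_def by (simp add: power2_eq_square)
    have e2: "poly PQ (of_real x) = of_real (A*(1-x^2) + B*(2*x) + R*(1+x^2))" unfolding PQ_def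
      by simp (simp add: algebra_simps power2_eq_square)
    have e3: "poly PP (of_real x) = of_real (B*(1-x^2) - A*(2*x))" unfolding PP_def
      by simp (simp add: algebra_simps power2_eq_square)
    have e4: "poly PMM (of_real x) = of_real (al*(1-x^2) + be*(2*x) + ga*(1+x^2))" unfolding PMM_def
      by simp (simp add: algebra_simps power2_eq_square)
    have "poly P (of_real x) = of_real (((1+x^2)^3 + (A*(1-x^2) + B*(2*x) + R*(1+x^2))^2*(1+x^2) + (B*(1-x^2) - A*(2*x))^2*(1+x^2)
          - rr*(al*(1-x^2) + be*(2*x) + ga*(1+x^2))*(1+x^2)^2
          - rr*(A*(1-x^2) + B*(2*x) + R*(1+x^2))*((1+x^2)^2 + (A*(1-x^2) + B*(2*x) + R*(1+x^2))^2))^2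
        - ka^2 * ((1+x^2)^2 + (A*(1-x^2) + B*(2*x) + R*(1+x^2))^2)^3)"
      unfolding P_def PL_def PU_def poly_diff poly_add poly_mult poly_power poly_smult e1 e2 e3 e4
      by (simp only: of_real_add of_real_mult of_real_diff of_real_power mult.assoc)
    also have "\<dots> = 0" using hx[OF that] by simp
    finally show ?thesis .
  qed
  have P0: "P = 0"
  proof (rule ccontr)
    assume "P \<noteq> 0"
    then have "finite {z. poly P z = 0}" by (rule poly_roots_finite)
    moreover have "of_real ` Xs \<subseteq> {z. poly P z = 0}" using ev by auto
    ultimately have "finite (of_real ` Xs :: complex set)" using finite_subset by blast
    then have "finite Xs" using finite_imageD[of of_real Xs] inj_of_real unfolding inj_on_def by (metis inj_def inj_of_real subset_UNIV inj_on_subset)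
    with inf show False by simp
  qed
  define c0 where "c0 = 1 + \<i> * of_real (A+R)"
  define c1 where "c1 = \<i> * of_real (2*B)"
  define c2 where "c2 = 1 + \<i> * of_real (R-A)"
  define f where "f = [:c0, c1, c2:]"
  define g where "g = [:cnj c0, cnj c1, cnj c2:]"
  have fPM: "f = PM + smult \<i> PQ" unfolding f_def PM_def PQ_def c0_def c1_def c2_def by simp
  have gPM: "g = PM - smult \<i> PQ" unfolding g_def PM_def PQ_def c0_def c1_def c2_def by (simp add: complex_cnj_mult)
  have PUfg: "PU = f * g" unfolding PU_def fPM gPM
    by (simp add: algebra_simps power2_eq_square)
  have c2nz: "c2 \<noteq> 0" unfolding c2_def by (auto simp: complex_eq_iff)
  define z where "z = (- c1 + csqrt (c1^2 - 4*c0*c2)) / (2*c2)"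
  have fz: "poly f z = 0"
  proof -
    have "(2*c2*z + c1)^2 = c1^2 - 4*c0*c2" unfolding z_def using c2nz by (simp add: field_simps)
    then have "4*c2*(c0 + z*(c1 + z*c2)) = 0" by (simp add: algebra_simps power2_eq_square)
    then show ?thesis unfolding f_def using c2nz by simp
  qed
  have f'z: "poly (pderiv f) z \<noteq> 0"
  proof
    assume "poly (pderiv f) z = 0"
    then have d: "c1 + 2 * c2 * z = 0" unfolding f_def by (simp add: pderiv_pCons algebra_simps)
    then have "2*c2*z = - c1" by (simp add: eq_neg_iff_add_eq_0 algebra_simps)
    then have "z = - c1 / (2*c2)" using c2nz by (simp add: field_simps)
    with fz have "c0 + (- c1 / (2*c2))*(c1 + (- c1 / (2*c2))*c2) = 0" unfolding f_def by simp
    then have "c1^2 = 4*c0*c2" using c2nz by (simp add: field_simps power2_eq_square)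
    then have h: "Re (c1^2) = Re (4*c0*c2)" "Im (c1^2) = Im (4*c0*c2)" by simp_all
    have r1: "Re (c1^2) = -4*B^2" "Im (c1^2) = 0" unfolding c1_def by (simp_all add: power2_eq_square)
    have r2: "Re (4*c0*c2) = 4*(1 - (A+R)*(R-A))" "Im (4*c0*c2) = 4*((A+R) + (R-A))"
      unfolding c0_def c2_def by (simp_all add: algebra_simps)
    have "R = 0" using h(2) r1(2) r2(2) by simp
    then have "-4*B^2 = 4*(1 + A^2)" using h(1) r1(1) r2(1) by (simp add: power2_eq_square)
    moreover have "B^2 \<ge> 0" "A^2 \<ge> 0" by simp_all
    ultimately show False by (smt (verit))
  qed
  have gz: "poly g z \<noteq> 0"
  proof
    assume gz: "poly g z = 0"
    have "poly f z + poly g z = 2 * poly PM z" unfolding fPM gPM by simp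
    then have "2*(1 + z^2) = 0" using fz gz unfolding PM_def by (simp add: algebra_simps power2_eq_square)
    then have "1 + z^2 = 0" by (metis mult_eq_0_iff zero_neq_numeral)
    then have "z^2 = -1" by (simp add: eq_neg_iff_add_eq_0 add.commute)
    then have "z^2 = \<i>^2" by simp
    then have zz: "z = \<i> \<or> z = - \<i>" by (metis power2_eq_iff)
    have "poly f z - poly g z = 2 * \<i> * poly PQ z" unfolding fPM gPM by (simp add: algebra_simps)
    then have pq: "poly PQ z = 0" using fz gz by simp
    have "A = 0 \<and> B = 0" using zz
    proof
      assume "z = \<i>"
      then have "Re (poly PQ \<i>) = 0" "Im (poly PQ \<i>) = 0" using pq by simp_all
      then show ?thesis unfolding PQ_def by simp
    next
      assume "z = - \<i>"
      then have "Re (poly PQ (- \<i>)) = 0" "Im (poly PQ (- \<i>)) = 0" using pq by simp_all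
      then show ?thesis unfolding PQ_def by simp
    qed
    then show False using AB by simp
  qed
  have fnz: "f \<noteq> 0" unfolding f_def using c2nz by simp
  have gnz: "g \<noteq> 0" unfolding g_def using c2nz by simp
  have of: "order z f = 1"
    using order_pderiv[OF fnz fz] order_0I[OF f'z] by simp
  have og: "order z g = 0" using order_0I[OF gz] .
  have PLeq: "PL * PL = smult (of_real (ka^2)) (f*g*(f*g)*(f*g))"
    using P0 unfolding P_def PUfg by (simp add: power2_eq_square power3_eq_cube)
  have rhsnz: "smult (of_real (ka^2)) (f*g*(f*g)*(f*g)) \<noteq> 0" using ka fnz gnz by simp
  have "order z (PL * PL) = order z (smult (of_real (ka^2)) (f*g*(f*g)*(f*g)))" using PLeq by simp
  also have "\<dots> = 3"
  proof -
    have fg: "f*g \<noteq> 0" using fnz gnz by simp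
    have o1: "order z (f*g) = 1" using order_mult[OF fg] of og by simp
    have fg2: "f*g*(f*g) \<noteq> 0" using fg by simp
    have o2: "order z (f*g*(f*g)) = 2" using order_mult[OF fg2] o1 by simp
    have fg3: "f*g*(f*g)*(f*g) \<noteq> 0" using fg by simp
    have "order z (f*g*(f*g)*(f*g)) = 3" using order_mult[OF fg3] o1 o2 by simp
    then show ?thesis using ka by (simp add: order_smult)
  qed
  finally have "order z (PL*PL) = 3" .
  moreover have "order z (PL * PL) = 2 * order z PL"
  proof -
    have pp: "PL * PL \<noteq> 0" using PLeq rhsnz by metis
    show ?thesis using order_mult[OF pp] by simp
  qed
  ultimately show False by presburger
qed


theorem theorem6:
  fixes a b r :: "real \<Rightarrow> real" and I J :: "real set" and X :: "real \<Rightarrow> real \<Rightarrow> real^3"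
  assumes I: "is_interval I" "open I" "I \<noteq> {}"
      and J: "is_interval J" "open J" "J \<noteq> {}"
      and smooth: "smooth_on_real I a" "smooth_on_real I b" "smooth_on_real I r"
      and rpos: "\<forall>s\<in>I. r s > 0"
      and X_def: "X = (\<lambda>s t. vector [a s + r s * cos t, b s + r s * sin t, s])"
      and Hconst: "\<exists>c. c \<noteq> 0 \<and> (\<forall>s\<in>I. \<forall>t\<in>J. phi_mean_curv X s t = c)"
  shows "\<exists>a0 b0. \<forall>s\<in>I. a s = a0 \<and> b s = b0"
proof -
  obtain c where c: "c \<noteq> 0" "\<forall>s\<in>I. \<forall>t\<in>J. phi_mean_curv X s t = c" using Hconst by blast
  have zero: "deriv a s = 0 \<and> deriv b s = 0" if s: "s \<in> I" for s
  proof -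
    define A where "A = deriv a s"
    define B where "B = deriv b s"
    define R where "R = deriv r s"
    define A2 where "A2 = deriv (deriv a) s"
    define B2 where "B2 = deriv (deriv b) s"
    define R2 where "R2 = deriv (deriv r) s"
    note G = geom[OF I(2) s smooth X_def]
    have key: "(1 + (A * cos t+B * sin t+R)^2 + (B * cos t-A * sin t)^2 - r s*(A2 * cos t+B2 * sin t+R2) - r s*(A * cos t+B * sin t+R)*(1+(A * cos t+B * sin t+R)^2))^2
         = (2*c*r s)^2 * (1 + (A * cos t+B * sin t+R)^2)^3" if t: "t \<in> J" for t
    proof -
      have Hc: "phi_mean_curv X s t = c" using c(2) s t by blast
      show ?thesis
        apply (rule alg[where Xs="d_s X s t" and Xt="d_t X s t" and Xss="d_s (d_s X) s t"
              and Xst="d_t (d_s X) s t" and Xtt="d_t (d_t X) s t" and N="unit_normal X s t"])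
        subgoal by (simp add: sin_cos_squared_add2)
        subgoal using rpos s by simp
        subgoal unfolding A_def B_def R_def by (rule G(1))
        subgoal by (rule G(2))
        subgoal unfolding A2_def B2_def R2_def by (rule G(3))
        subgoal unfolding R_def by (rule G(4))
        subgoal by (rule G(5))
        subgoal by (simp add: unit_normal_def)
        subgoal using Hc unfolding phi_mean_curv_def mean_curv_def Let_def by simp
        done
    qed
    define Xset where "Xset = {x. \<exists>t\<in>J. cos t = (1 - x^2) / (1 + x^2) \<and> sin t = 2 * x / (1 + x^2)}"
    have inf: "infinite Xset" unfolding Xset_def using many_x[OF J(2,3)] .
    have "r s > 0" using rpos s by blast
    then have ka: "2*c*r s \<noteq> 0" using c(1) by simp
    have "A = 0 \<and> B = 0"
    proof (rule poly_contra[OF ka inf])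
      fix x assume "x \<in> Xset"
      then obtain t where t: "t \<in> J" "cos t = (1 - x^2) / (1 + x^2)" "sin t = 2 * x / (1 + x^2)"
        unfolding Xset_def by blast
      show "((1+x^2)^3 + (A*(1-x^2) + B*(2*x) + R*(1+x^2))^2*(1+x^2) + (B*(1-x^2) - A*(2*x))^2*(1+x^2)
          - r s*(A2*(1-x^2) + B2*(2*x) + R2*(1+x^2))*(1+x^2)^2
          - r s*(A*(1-x^2) + B*(2*x) + R*(1+x^2))*((1+x^2)^2 + (A*(1-x^2) + B*(2*x) + R*(1+x^2))^2))^2
        = (2*c*r s)^2 * ((1+x^2)^2 + (A*(1-x^2) + B*(2*x) + R*(1+x^2))^2)^3"
        by (rule subst_x[OF t(2,3) key[OF t(1)]])
    qed
    then show ?thesis unfolding A_def B_def .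
  qed
  have cv: "convex I" using I(1) by (simp add: is_interval_convex)
  obtain a0 where a0: "\<forall>s\<in>I. a s = a0"
  proof -
    have "\<exists>a0. \<forall>s\<in>I. a s = a0"
    proof (rule has_field_derivative_zero_constant[OF cv])
      fix s assume s: "s \<in> I"
      show "(a has_field_derivative 0) (at s within I)"
        using smooth_D1(1)[OF smooth(1) s] zero[OF s] by (simp add: has_field_derivative_at_within)
    qed
    then show ?thesis using that by blast
  qed
  obtain b0 where b0: "\<forall>s\<in>I. b s = b0"
  proof -
    have "\<exists>b0. \<forall>s\<in>I. b s = b0"
    proof (rule has_field_derivative_zero_constant[OF cv])
      fix s assume s: "s \<in> I"
      show "(b has_field_derivative 0) (at s within I)"
        using smooth_D1(1)[OF smooth(2) s] zero[OF s] by (simp add: has_field_derivative_at_within)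
    qed
    then show ?thesis using that by blast
  qed
  show ?thesis using a0 b0 by blast
qed

end
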